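(* Let $\gamma$ be a $q$-curve with winding number $k$. Then: (a) if $q>1$, then $k\neq0$; (b) $q$ and $k$ are relatively prime; (c) if $\zeta$ is another $q$-curve (same $q$) whose point set does not intersect that of $\gamma$, then $\zeta$ has the same winding number $k$.
   Context: $\mathbb{T}^1=\mathbb{R}/\mathbb{Z}$, $\mathbb{T}^2=\mathbb{T}^1\times\mathbb{T}^1$. Let $q\in\mathbb{N}$. A $q$-curve is given by a continuous function $\hat\gamma:\mathbb{R}\to\mathbb{R}$ such that for some $k\in\mathbb{Z}$: $\hat\gamma(\hat\theta+q)-\hat\gamma(\hat\theta)=k$ for all $\hat\theta\in\mathbb{R}$, and $\hat\gamma(\hat\theta+l)-\hat\gamma(\hat\theta)\notin\mathbb{Z}$ for all $\hat\theta\in\mathbb{R}$ and all $1\le l<q$. The $q$-curve itself is the $q$-valued graph $\gamma=(\gamma_1,\dots,\gamma_q)$ on $\mathbb{T}^1$, $\gamma_i(\theta)=\hat\gamma(\hat\theta+i-1)\bmod1$ where $\hat\theta\in[0,1)$ represents $\theta$; equivalently its point set is $\Gamma=\{(\hat\theta\bmod1,\hat\gamma(\hat\theta)\bmod1):\hat\theta\in\mathbb{R}\}\subseteq\mathbb{T}^2$. Any such $\hat\gamma$ projecting onto $\Gamma$ is called a lift of $\gamma$, and the integer $k$ (independent of the lift) is the winding number of $\gamma$. *)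

theory Defs
  imports "HOL-Analysis.Analysis"
begin

text \<open>The torus T^1 = R/Z is represented by the fundamental domain [0,1), the
  projection R -> T^1 being frac.  Points of T^2 are pairs in [0,1) x [0,1).\<close>

definition q_curve_lift :: "nat \<Rightarrow> int \<Rightarrow> (real \<Rightarrow> real) \<Rightarrow> bool" where
  "q_curve_lift q k g \<longleftrightarrow>
     continuous_on UNIV g \<and>
     (\<forall>t. g (t + real q) - g t = of_int k) \<and>
     (\<forall>t. \<forall>l::nat. 1 \<le> l \<and> l < q \<longrightarrow> g (t + real l) - g t \<notin> \<int>)"

definition curve_points :: "(real \<Rightarrow> real) \<Rightarrow> (real \<times> real) set" where
  "curve_points g = {(frac t, frac (g t)) | t. True}"

end

theory Submission
  imports Defs
begin

lemma nonint_band: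
  fixes F :: "real \<Rightarrow> real"
  assumes c: "continuous_on UNIV F" and ni: "\<And>t. F t \<notin> \<int>"
  shows "\<exists>m::int. \<forall>t. of_int m < F t \<and> F t < of_int m + 1"
proof -
  define m where "m = \<lfloor>F 0\<rfloor>"
  have hit: "False" if "F a \<le> y" "y \<le> F b" "y \<in> \<int>" for a b y
  proof (cases "a \<le> b")
    case True
    from IVT'[of F a y b] that True c obtain x where "F x = y"
      by (meson continuous_on_subset subset_UNIV)
    with ni that show False by metis
  next
    case False
    from IVT2'[where f=F and a=b and b=a and y=y] that False c obtain x where "F x = y"
      by (meson continuous_on_subset subset_UNIV less_imp_le not_le)
    with ni that show False by metis
  qed
  have "of_int m < F t \<and> F t < of_int m + 1" for t
  proof
    have "of_int m \<le> F 0" unfolding m_def by simp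
    have "of_int m \<noteq> F 0" using ni[of 0] by (metis Ints_of_int)
    show "of_int m < F t"
    proof (rule ccontr)
      assume "\<not> of_int m < F t"
      then have "F t \<le> of_int m" by simp
      with \<open>of_int m \<le> F 0\<close> hit[of t "of_int m" 0] show False by simp
    qed
    show "F t < of_int m + 1"
    proof (rule ccontr)
      assume "\<not> F t < of_int m + 1"
      then have "of_int m + 1 \<le> F t" by simp
      moreover have "F 0 \<le> of_int m + 1" unfolding m_def by linarith
      ultimately show False using hit[of 0 "of_int m + 1" t]
        by (metis Ints_1 Ints_add Ints_of_int)
    qed
  qed
  then show ?thesis by blast
qed

lemma telesc:
  fixes g :: "real \<Rightarrow> real"
  shows "(\<Sum>j<d. g (real (Suc j) * real l) - g (real j * real l))
         = g (real d * real l) - g 0"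
  using sum_lessThan_telescope[of "\<lambda>j. g (real j * real l)" d] by simp

lemma coprime_part:
  assumes q1: "q \<ge> 1" and L: "q_curve_lift q k g"
  shows "coprime (int q) k"
proof (rule ccontr)
  assume nc: "\<not> coprime (int q) k"
  define e where "e = gcd (int q) k"
  have e0: "e \<ge> 0" unfolding e_def by simp
  have e1: "e \<noteq> 1" using nc unfolding e_def by (simp add: coprime_iff_gcd_eq_1)
  have ene0: "e \<noteq> 0" using q1 unfolding e_def by simp
  have egt: "e > 1" using e0 e1 ene0 by simp
  have edq: "e dvd int q" and edk: "e dvd k" unfolding e_def by auto
  obtain l' where ql: "int q = e * l'" using edq by blast
  obtain k2 where kk: "k = e * k2" using edk by blast
  have l'pos: "l' > 0" proof -
    have "0 < e * l'" using ql q1 by linarith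
    moreover have "0 < e" using egt by simp
    ultimately show ?thesis using zero_less_mult_pos by blast
  qed
  define l where "l = nat l'"
  define d where "d = nat e"
  have qdl: "q = d * l" proof -
    have "q = nat (e * l')" using ql by simp
    then show ?thesis unfolding l_def d_def using e0 by (simp add: nat_mult_distrib)
  qed
  have l1: "1 \<le> l" using l'pos l_def by simp
  have lq: "l < q" using qdl egt l1 unfolding d_def by simp
  have cont: "continuous_on UNIV g" and per: "\<And>t. g (t + real q) - g t = of_int k"
    and ni: "\<And>t l. 1 \<le> l \<and> l < q \<Longrightarrow> g (t + real l) - g t \<notin> \<int>"
    using L unfolding q_curve_lift_def by auto
  define F where "F t = g (t + real l) - g t" for t
  have cF: "continuous_on UNIV F" unfolding F_def
    by (intro continuous_intros continuous_on_compose2[OF cont]) auto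
  have niF: "F t \<notin> \<int>" for t unfolding F_def using ni l1 lq by auto
  obtain m where m: "\<And>t. of_int m < F t \<and> F t < of_int m + 1"
    using nonint_band[OF cF niF] by blast
  have tel: "(\<Sum>j<d. F (real j * real l)) = of_int k"
  proof -
    have "(\<Sum>j<d. F (real j * real l)) = (\<Sum>j<d. g (real (Suc j) * real l) - g (real j * real l))"
      unfolding F_def by (intro sum.cong) (auto simp: algebra_simps)
    also have "\<dots> = g (real d * real l) - g 0" by (rule telesc)
    also have "\<dots> = of_int k" using per[of 0] qdl by simp
    finally show ?thesis .
  qed
  have "0 < d" using egt d_def by simp
  then have dne: "{..<d} \<noteq> {}" by auto
  have lo: "(\<Sum>j<d. (of_int m::real)) < (\<Sum>j<d. F (real j * real l))"
    by (rule sum_strict_mono) (use m dne in auto)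
  have hi: "(\<Sum>j<d. F (real j * real l)) < (\<Sum>j<d. (of_int m + 1::real))"
    by (rule sum_strict_mono) (use m dne in auto)
  have de: "real d = of_int e" unfolding d_def using e0 by simp
  have "of_int e * of_int m < (of_int e * of_int k2 :: real)"
    using lo tel kk de by simp
  then have "real_of_int m < of_int k2" using egt by (simp add: mult_less_cancel_left_pos)
  then have "m < k2" by simp
  moreover have "(of_int e * of_int k2 :: real) < of_int e * (of_int m + 1)"
    using hi tel kk de by simp
  then have "real_of_int k2 < of_int m + 1" using egt by (simp add: mult_less_cancel_left_pos)
  then have "k2 < m + 1" by linarith
  ultimately show False by simp
qed

theorem mainTheorem2:
  fixes q :: nat and k :: int and g :: "real \<Rightarrow> real"
  assumes "q \<ge> 1"
    and "q_curve_lift q k g"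
  shows "(q > 1 \<longrightarrow> k \<noteq> 0)
    \<and> coprime (int q) k
    \<and> (\<forall>h k'. q_curve_lift q k' h \<and> curve_points h \<inter> curve_points g = {} \<longrightarrow> k' = k)"
proof (intro conjI allI impI)
  show cp: "coprime (int q) k" using coprime_part assms by blast
  show "k \<noteq> 0" if "q > 1"
    using cp that by auto
  fix h k'
  assume H: "q_curve_lift q k' h \<and> curve_points h \<inter> curve_points g = {}"
  have cg: "continuous_on UNIV g" and pg: "\<And>t. g (t + real q) - g t = of_int k"
    using assms(2) unfolding q_curve_lift_def by auto
  have ch: "continuous_on UNIV h" and ph: "\<And>t. h (t + real q) - h t = of_int k'"
    using H unfolding q_curve_lift_def by auto
  define D where "D t = h t - g t" for t
  have cD: "continuous_on UNIV D" unfolding D_def using cg ch by (intro continuous_intros)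
  have niD: "D t \<notin> \<int>" for t
  proof
    assume "D t \<in> \<int>"
    moreover have "h t = g t + D t" by (simp add: D_def)
    ultimately have "frac (h t) = frac (g t)" using frac_add_int_right by metis
    then have "(frac t, frac (h t)) \<in> curve_points h \<inter> curve_points g"
      unfolding curve_points_def by auto
    with H show False by auto
  qed
  obtain m where m: "\<And>t. of_int m < D t \<and> D t < of_int m + 1"
    using nonint_band[OF cD niD] by blast
  have "D (0 + real q) - D 0 = of_int k' - of_int k"
    using pg[of 0] ph[of 0] unfolding D_def by simp
  moreover have "\<bar>D (0 + real q) - D 0\<bar> < 1" using m[of 0] m[of "0 + real q"] by linarith
  ultimately have "\<bar>of_int (k' - k)::real\<bar> < 1" by simp
  then show "k' = k" by linarith
qed

end
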